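(* Let $\mathds{k}$ be an algebraically closed field of characteristic $p>0$, $G$ a finite group, $\omega$ a 3-cocycle on $G$ with values in $\mathds{k}^\times$, $H\subseteq G$ a subgroup and $\phi:H\times H\to\mathds{k}^\times$ a 2-cochain with $d\phi=\omega|_H^{-1}$. Then the finite semisimple right $\mathbf{Vect}^\omega_G$-module category $\mathcal{M}(H,\phi)$ is separable if and only if $H$ has no $p$-torsion.
   Context: $\mathbf{Vect}^{\omega}_G$ is the fusion category of finite-dimensional $G$-graded $\mathds{k}$-vector spaces with simple objects $\mathds{k}_g$, $\mathds{k}_g\otimes\mathds{k}_h=\mathds{k}_{gh}$, and associator $(\mathds{k}_g\otimes \mathds{k}_h)\otimes \mathds{k}_m\rightarrow \mathds{k}_g\otimes (\mathds{k}_h\otimes \mathds{k}_m)$ given by $\omega(g,h,m)$. For a 2-cochain $\kappa$, $(d\kappa)(a,b,c)=\kappa(b,c)\kappa(ab,c)^{-1}\kappa(a,bc)\kappa(a,b)^{-1}$. $R(H,\phi)$ is the algebra in $\mathbf{Vect}^\omega_G$ given by the twisted group algebra $\mathds{k}^\phi[H]$ (object $\bigoplus_{h\in H}\mathds{k}_h$, product $h_1\cdot h_2=\phi(h_1,h_2)h_1h_2$), and $\mathcal{M}(H,\phi)$ is the right $\mathbf{Vect}^\omega_G$-module category of left $R(H,\phi)$-modules in $\mathbf{Vect}^\omega_G$. A finite semisimple right module category $\mathcal{M}$ over a fusion category $\mathcal{C}$ is separable if $\mathcal{M}\simeq Mod_{\mathcal{C}}(R)$ for a separable algebra $R$ in $\mathcal{C}$,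 i.e. one whose multiplication $R\otimes R\to R$ admits a section as a map of $R$-$R$-bimodules (this does not depend on the choice of $R$). *)

theory Defs
  imports "HOL-Algebra.Group" "HOL-Computational_Algebra.Polynomial"
begin

definition is_3cocycle :: "('g,'b) monoid_scheme \<Rightarrow> ('g \<Rightarrow> 'g \<Rightarrow> 'g \<Rightarrow> 'k::field) \<Rightarrow> bool" where
  "is_3cocycle G \<omega> \<longleftrightarrow>
     (\<forall>a\<in>carrier G. \<forall>b\<in>carrier G. \<forall>c\<in>carrier G. \<omega> a b c \<noteq> 0) \<and>
     (\<forall>a\<in>carrier G. \<forall>b\<in>carrier G. \<forall>c\<in>carrier G. \<forall>e\<in>carrier G.
        \<omega> b c e * inverse (\<omega> (a \<otimes>\<^bsub>G\<^esub> b) c e) * \<omega> a (b \<otimes>\<^bsub>G\<^esub> c) e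
        * inverse (\<omega> a b (c \<otimes>\<^bsub>G\<^esub> e)) * \<omega> a b c = 1)"

definition cobound2 :: "('g,'b) monoid_scheme \<Rightarrow> ('g \<Rightarrow> 'g \<Rightarrow> 'k::field) \<Rightarrow> 'g \<Rightarrow> 'g \<Rightarrow> 'g \<Rightarrow> 'k" where
  "cobound2 G \<kappa> a b c =
     \<kappa> b c * inverse (\<kappa> (a \<otimes>\<^bsub>G\<^esub> b) c) * \<kappa> a (b \<otimes>\<^bsub>G\<^esub> c) * inverse (\<kappa> a b)"

text \<open>Objects built from R = (+)_{h in H} k_h are described by their homogeneous bases:
  R has basis H (h of degree h), R (x) R has basis H x H ((a,b) of degree ab),
  R (x) (R (x) R) has basis H x (H x H), (R (x) R) (x) R has basis (H x H) x H.
  A morphism is given by its matrix of coefficients.  The associator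
  (k_a (x) k_b) (x) k_c -> k_a (x) (k_b (x) k_c) is multiplication by omega(a,b,c).\<close>

text \<open>Multiplication mu : R (x) R -> R, a (x) b |-> phi(a,b) ab; coefficient of c in mu(a (x) b).\<close>
definition tw_mult :: "('g,'b) monoid_scheme \<Rightarrow> ('g \<Rightarrow> 'g \<Rightarrow> 'k::field) \<Rightarrow> 'g \<times> 'g \<Rightarrow> 'g \<Rightarrow> 'k" where
  "tw_mult G \<phi> ab c = (if c = fst ab \<otimes>\<^bsub>G\<^esub> snd ab then \<phi> (fst ab) (snd ab) else 0)"

text \<open>Left R-action on R (x) R: (mu (x) id) o alpha^-1 : R (x) (R (x) R) -> R (x) R.\<close>
definition tw_left_act :: "('g,'b) monoid_scheme \<Rightarrow> ('g \<Rightarrow> 'g \<Rightarrow> 'g \<Rightarrow> 'k::field) \<Rightarrow> ('g \<Rightarrow> 'g \<Rightarrow> 'k)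
    \<Rightarrow> 'g \<times> ('g \<times> 'g) \<Rightarrow> 'g \<times> 'g \<Rightarrow> 'k" where
  "tw_left_act G \<omega> \<phi> gab xy =
     (let g = fst gab; a = fst (snd gab); b = snd (snd gab) in
      if xy = (g \<otimes>\<^bsub>G\<^esub> a, b) then inverse (\<omega> g a b) * \<phi> g a else 0)"

text \<open>Right R-action on R (x) R: (id (x) mu) o alpha : (R (x) R) (x) R -> R (x) R.\<close>
definition tw_right_act :: "('g,'b) monoid_scheme \<Rightarrow> ('g \<Rightarrow> 'g \<Rightarrow> 'g \<Rightarrow> 'k::field) \<Rightarrow> ('g \<Rightarrow> 'g \<Rightarrow> 'k)
    \<Rightarrow> ('g \<times> 'g) \<times> 'g \<Rightarrow> 'g \<times> 'g \<Rightarrow> 'k" where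
  "tw_right_act G \<omega> \<phi> abg xy =
     (let a = fst (fst abg); b = snd (fst abg); g = snd abg in
      if xy = (a, b \<otimes>\<^bsub>G\<^esub> g) then \<omega> a b g * \<phi> b g else 0)"

text \<open>R(H,phi) is a separable algebra in Vect^omega_G: the multiplication R (x) R -> R admits
  a section s : R -> R (x) R (a morphism in Vect^omega_G, i.e. degree preserving) which is
  a map of R-R-bimodules.  s h (a,b) is the coefficient of a (x) b in s(h).\<close>
definition twisted_group_alg_separable ::
    "('g,'b) monoid_scheme \<Rightarrow> ('g \<Rightarrow> 'g \<Rightarrow> 'g \<Rightarrow> 'k::field) \<Rightarrow> 'g set \<Rightarrow> ('g \<Rightarrow> 'g \<Rightarrow> 'k) \<Rightarrow> bool" where
  "twisted_group_alg_separable G \<omega> H \<phi> \<longleftrightarrow>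
    (\<exists>s :: 'g \<Rightarrow> 'g \<times> 'g \<Rightarrow> 'k.
       \<comment> \<open>s is a morphism of G-graded vector spaces\<close>
       (\<forall>h\<in>H. \<forall>a\<in>H. \<forall>b\<in>H. s h (a, b) \<noteq> 0 \<longrightarrow> a \<otimes>\<^bsub>G\<^esub> b = h) \<and>
       \<comment> \<open>mu o s = id_R\<close>
       (\<forall>h\<in>H. \<forall>h'\<in>H. (\<Sum>ab\<in>H \<times> H. s h ab * tw_mult G \<phi> ab h') = (if h' = h then 1 else 0)) \<and>
       \<comment> \<open>left R-linearity: s o mu = lambda o (id (x) s)\<close>
       (\<forall>g\<in>H. \<forall>h\<in>H. \<forall>xy\<in>H \<times> H.
          (\<Sum>c\<in>H. tw_mult G \<phi> (g, h) c * s c xy)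
          = (\<Sum>ab\<in>H \<times> H. s h ab * tw_left_act G \<omega> \<phi> (g, ab) xy)) \<and>
       \<comment> \<open>right R-linearity: s o mu = rho o (s (x) id)\<close>
       (\<forall>h\<in>H. \<forall>g\<in>H. \<forall>xy\<in>H \<times> H.
          (\<Sum>c\<in>H. tw_mult G \<phi> (h, g) c * s c xy)
          = (\<Sum>ab\<in>H \<times> H. s h ab * tw_right_act G \<omega> \<phi> (ab, g) xy)))"

text \<open>M(H,phi) = Mod(R(H,phi)) is separable iff R(H,phi) is separable (independence of R).\<close>
definition module_cat_M_separable ::
    "('g,'b) monoid_scheme \<Rightarrow> ('g \<Rightarrow> 'g \<Rightarrow> 'g \<Rightarrow> 'k::field) \<Rightarrow> 'g set \<Rightarrow> ('g \<Rightarrow> 'g \<Rightarrow> 'k) \<Rightarrow> bool" where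
  "module_cat_M_separable G \<omega> H \<phi> \<longleftrightarrow> twisted_group_alg_separable G \<omega> H \<phi>"

definition has_no_p_torsion :: "('g,'b) monoid_scheme \<Rightarrow> 'g set \<Rightarrow> nat \<Rightarrow> bool" where
  "has_no_p_torsion G H p \<longleftrightarrow> (\<forall>h\<in>H. h [^]\<^bsub>G\<^esub> p = \<one>\<^bsub>G\<^esub> \<longrightarrow> h = \<one>\<^bsub>G\<^esub>)"

end

theory Submission
  imports Defs "HOL-Algebra.Sylow" "HOL-Algebra.Multiplicative_Group"
begin

lemma cauchy_sub:
  assumes "group G" "finite (carrier G)" "subgroup H G" "prime p" "p dvd card H"
  shows "\<exists>x\<in>H. x \<noteq> \<one>\<^bsub>G\<^esub> \<and> x [^]\<^bsub>G\<^esub> p = \<one>\<^bsub>G\<^esub>"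
proof -
  define K where "K = G\<lparr>carrier := H\<rparr>"
  have gK: "group K" unfolding K_def using group.subgroup_imp_group[OF assms(1,3)] .
  have fH: "finite H" by (rule finite_subset[OF subgroup.subset[OF assms(3)] assms(2)])
  obtain m where m: "card H = p * m" using assms(5) by blast
  have "order K = p^1 * m" unfolding K_def order_def using m by simp
  then obtain P where P: "subgroup P K" "card P = p"
    using sylow_thm[OF assms(4) gK] fH K_def by fastforce
  define L where "L = K\<lparr>carrier := P\<rparr>"
  have gL: "group L" unfolding L_def using group.subgroup_imp_group[OF gK P(1)] .
  have c2: "card P \<ge> 2" using P(2) assms(4) prime_ge_2_nat by auto
  have "\<exists>x\<in>P. x \<noteq> \<one>\<^bsub>G\<^esub>"
  proof (rule ccontr)
    assume "\<not> (\<exists>x\<in>P. x \<noteq> \<one>\<^bsub>G\<^esub>)"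
    then have "P \<subseteq> {\<one>\<^bsub>G\<^esub>}" by blast
    then have "card P \<le> 1" using card_mono[of "{\<one>\<^bsub>G\<^esub>}" P] by simp
    then show False using c2 by simp
  qed
  then obtain x where x: "x \<in> P" "x \<noteq> \<one>\<^bsub>G\<^esub>" by blast
  have "x [^]\<^bsub>L\<^esub> order L = \<one>\<^bsub>L\<^esub>"
    using group.pow_order_eq_1[OF gL] x unfolding L_def by simp
  moreover have "order L = p" unfolding L_def order_def using P by simp
  moreover have "x [^]\<^bsub>L\<^esub> p = x [^]\<^bsub>G\<^esub> p"
    unfolding L_def K_def nat_pow_def by simp
  moreover have "\<one>\<^bsub>L\<^esub> = \<one>\<^bsub>G\<^esub>" unfolding L_def K_def by simp
  moreover have "x \<in> H" using P(1) x(1) subgroup.subset unfolding K_def by fastforce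
  ultimately show ?thesis using x by metis
qed

lemma sum_single_nz:
  assumes "finite A" "p \<in> A" "\<And>x. x \<in> A \<Longrightarrow> x \<noteq> p \<Longrightarrow> f x = 0"
  shows "sum f A = f p"
proof -
  have "sum f A = f p + sum f (A - {p})" by (rule sum.remove[OF assms(1,2)])
  also have "sum f (A - {p}) = 0" using assms(3) by (intro sum.neutral) auto
  finally show ?thesis by simp
qed

lemma ptors:
  assumes "group G" "subgroup H G" "finite H" "prime p" "h \<in> H" "h [^]\<^bsub>G\<^esub> p = \<one>\<^bsub>G\<^esub>"
    "h \<noteq> \<one>\<^bsub>G\<^esub>"
  shows "p dvd card H"
proof -
  define K where "K = G\<lparr>carrier := H\<rparr>"
  have gK: "group K" unfolding K_def using group.subgroup_imp_group[OF assms(1,2)] .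
  have hK: "h \<in> carrier K" unfolding K_def using assms by simp
  have pc: "h [^]\<^bsub>K\<^esub> p = h [^]\<^bsub>G\<^esub> p"
    unfolding K_def by (rule monoid.nat_pow_consistent[symmetric]) (use assms(1) group.is_monoid in blast)
  have oc: "\<one>\<^bsub>K\<^esub> = \<one>\<^bsub>G\<^esub>" unfolding K_def by simp
  have "h [^]\<^bsub>K\<^esub> p = \<one>\<^bsub>K\<^esub>" using assms(6) pc oc by simp
  then have d: "group.ord K h dvd p" using group.pow_eq_id[OF gK hK] by simp
  have n1: "group.ord K h \<noteq> 1" using group.ord_eq_1[OF gK hK] assms(7) unfolding K_def by simp
  have "group.ord K h = p" using d assms(4) n1 unfolding prime_nat_iff by blast
  moreover have "group.ord K h dvd order K" using group.ord_dvd_group_order[OF gK hK] .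
  moreover have "order K = card H" unfolding K_def order_def by simp
  ultimately show ?thesis by simp
qed


lemma main_dir1:
  fixes G :: "('g, 'b) monoid_scheme" (structure)
    and \<omega> :: "'g \<Rightarrow> 'g \<Rightarrow> 'g \<Rightarrow> 'k::field"
    and \<phi> :: "'g \<Rightarrow> 'g \<Rightarrow> 'k"
  assumes gr: "group G" and sg: "subgroup H G" and fH: "finite H"
    and nz: "of_nat (card H) \<noteq> (0::'k)"
    and om: "\<forall>a\<in>H. \<forall>b\<in>H. \<forall>c\<in>H. \<omega> a b c \<noteq> 0"
    and ph: "\<forall>a\<in>H. \<forall>b\<in>H. \<phi> a b \<noteq> 0"
    and D: "\<forall>a\<in>H. \<forall>b\<in>H. \<forall>c\<in>H. cobound2 G \<phi> a b c = inverse (\<omega> a b c)"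
  shows "twisted_group_alg_separable G \<omega> H \<phi>"
proof -
  interpret group G by (rule gr)
  have HG: "\<And>x. x \<in> H \<Longrightarrow> x \<in> carrier G" by (rule subgroup.mem_carrier[OF sg])
  have mc: "\<And>x y. x \<in> H \<Longrightarrow> y \<in> H \<Longrightarrow> x \<otimes> y \<in> H" by (rule subgroup.m_closed[OF sg])
  have ic: "\<And>x. x \<in> H \<Longrightarrow> inv x \<in> H" by (rule subgroup.m_inv_closed[OF sg])
  define n :: 'k where "n = of_nat (card H)"
  define s where "s = (\<lambda>h (ab::'g\<times>'g). if fst ab \<otimes> snd ab = h then inverse n * inverse (\<phi> (fst ab) (snd ab)) else (0::'k))"
  have C1: "\<forall>h\<in>H. \<forall>a\<in>H. \<forall>b\<in>H. s h (a, b) \<noteq> 0 \<longrightarrow> a \<otimes> b = h"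
    unfolding s_def by simp
  have C2: "(\<Sum>ab\<in>H \<times> H. s h ab * tw_mult G \<phi> ab h') = (if h' = h then 1 else 0)"
    if h: "h \<in> H" and h': "h' \<in> H" for h h'
  proof (cases "h' = h")
    case False
    have "(\<Sum>ab\<in>H \<times> H. s h ab * tw_mult G \<phi> ab h') = 0"
      unfolding s_def tw_mult_def using False by (intro sum.neutral) auto
    then show ?thesis using False by simp
  next
    case True
    have "(\<Sum>ab\<in>H \<times> H. s h ab * tw_mult G \<phi> ab h') = (\<Sum>a\<in>H. \<Sum>b\<in>H. s h (a,b) * tw_mult G \<phi> (a,b) h')"
      by (simp add: sum.cartesian_product)
    also have "\<dots> = (\<Sum>a\<in>H. inverse n)"
    proof (rule sum.cong[OF refl])
      fix a assume a: "a \<in> H"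
      have "(\<Sum>b\<in>H. s h (a,b) * tw_mult G \<phi> (a,b) h') = s h (a, inv a \<otimes> h) * tw_mult G \<phi> (a, inv a \<otimes> h) h'"
      proof (rule sum_single_nz[OF fH mc[OF ic[OF a] h]])
        fix b assume b: "b \<in> H" "b \<noteq> inv a \<otimes> h"
        have "a \<otimes> b \<noteq> h" using inv_solve_left[of b a h] b a h HG by auto
        then show "s h (a, b) * tw_mult G \<phi> (a, b) h' = 0" unfolding s_def by simp
      qed
      also have "\<dots> = inverse n"
        using a h HG ph ic mc True unfolding s_def tw_mult_def
        by (simp add: m_assoc[symmetric])
      finally show "(\<Sum>b\<in>H. s h (a,b) * tw_mult G \<phi> (a,b) h') = inverse n" .
    qed
    also have "\<dots> = 1" using nz unfolding n_def by simp
    finally show ?thesis using True by simp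
  qed
  have C3: "(\<Sum>c\<in>H. tw_mult G \<phi> (g, h) c * s c xy)
          = (\<Sum>ab\<in>H \<times> H. s h ab * tw_left_act G \<omega> \<phi> (g, ab) xy)"
    if g: "g \<in> H" and h: "h \<in> H" and xy: "xy \<in> H \<times> H" for g h xy
  proof -
    obtain x y where xyd: "xy = (x, y)" "x \<in> H" "y \<in> H" using xy by auto
    define a where "a = inv g \<otimes> x"
    have a: "a \<in> H" unfolding a_def using mc ic g xyd by simp
    have x: "x = g \<otimes> a" unfolding a_def using g xyd HG by (simp add: m_assoc[symmetric])
    have L: "(\<Sum>c\<in>H. tw_mult G \<phi> (g, h) c * s c xy) = tw_mult G \<phi> (g, h) (g \<otimes> h) * s (g \<otimes> h) xy"
      by (rule sum_single_nz[OF fH mc[OF g h]]) (simp add: tw_mult_def)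
    have R: "(\<Sum>ab\<in>H \<times> H. s h ab * tw_left_act G \<omega> \<phi> (g, ab) xy) = s h (a, y) * tw_left_act G \<omega> \<phi> (g, (a, y)) xy"
    proof (rule sum_single_nz)
      fix ab assume ab: "ab \<in> H \<times> H" "ab \<noteq> (a, y)"
      then obtain a' b' where "ab = (a', b')" "a' \<in> H" "b' \<in> H" by auto
      moreover have "(x, y) \<noteq> (g \<otimes> a', b')"
      proof
        assume "(x, y) = (g \<otimes> a', b')"
        then have e: "g \<otimes> a = g \<otimes> a'" "y = b'" using x by auto
        then have "a = a'" using e(1) HG g a calculation(2) by (simp add: Units_eq)
        then show False using ab calculation(1) e(2) by simp
      qed
      ultimately show "s h ab * tw_left_act G \<omega> \<phi> (g, ab) xy = 0" unfolding tw_left_act_def xyd by auto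
    qed (use fH a xyd in auto)
    have eqv: "(g \<otimes> a) \<otimes> y = g \<otimes> h \<longleftrightarrow> a \<otimes> y = h" using g a h xyd HG by (simp add: m_assoc)
    have Dg: "\<phi> a y * inverse (\<phi> (g \<otimes> a) y) * \<phi> g (a \<otimes> y) * inverse (\<phi> g a) = inverse (\<omega> g a y)"
      using D g a xyd unfolding cobound2_def by auto
    have nz1: "\<phi> a y \<noteq> 0" "\<phi> (g \<otimes> a) y \<noteq> 0" "\<phi> g (a \<otimes> y) \<noteq> 0" "\<phi> g a \<noteq> 0" "\<omega> g a y \<noteq> 0"
      using ph om g a xyd mc by auto
    have key: "inverse (\<phi> (g \<otimes> a) y) * \<phi> g (a \<otimes> y) = inverse (\<phi> a y) * (inverse (\<omega> g a y) * \<phi> g a)"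
    proof -
      have "\<omega> g a y = inverse (\<phi> a y * inverse (\<phi> (g \<otimes> a) y) * \<phi> g (a \<otimes> y) * inverse (\<phi> g a))"
        using Dg nz1 by simp
      then show ?thesis using nz1 by (simp add: field_simps)
    qed
    show ?thesis unfolding L R
      using key eqv unfolding s_def tw_mult_def tw_left_act_def xyd x
      by (auto simp: mult_ac)
  qed
  have C4: "(\<Sum>c\<in>H. tw_mult G \<phi> (h, g) c * s c xy)
          = (\<Sum>ab\<in>H \<times> H. s h ab * tw_right_act G \<omega> \<phi> (ab, g) xy)"
    if h: "h \<in> H" and g: "g \<in> H" and xy: "xy \<in> H \<times> H" for g h xy
  proof -
    obtain x y where xyd: "xy = (x, y)" "x \<in> H" "y \<in> H" using xy by auto
    define b where "b = y \<otimes> inv g"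
    have b: "b \<in> H" unfolding b_def using mc ic g xyd by simp
    have y: "y = b \<otimes> g" unfolding b_def using g xyd HG by (simp add: m_assoc)
    have L: "(\<Sum>c\<in>H. tw_mult G \<phi> (h, g) c * s c xy) = tw_mult G \<phi> (h, g) (h \<otimes> g) * s (h \<otimes> g) xy"
      by (rule sum_single_nz[OF fH mc[OF h g]]) (simp add: tw_mult_def)
    have R: "(\<Sum>ab\<in>H \<times> H. s h ab * tw_right_act G \<omega> \<phi> (ab, g) xy) = s h (x, b) * tw_right_act G \<omega> \<phi> ((x, b), g) xy"
    proof (rule sum_single_nz)
      fix ab assume ab: "ab \<in> H \<times> H" "ab \<noteq> (x, b)"
      then obtain a' b' where "ab = (a', b')" "a' \<in> H" "b' \<in> H" by auto
      moreover have "(x, y) \<noteq> (a', b' \<otimes> g)"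
      proof
        assume "(x, y) = (a', b' \<otimes> g)"
        then have e: "b \<otimes> g = b' \<otimes> g" "x = a'" using y by auto
        then have "b = b'" using e(1) HG g b calculation(3) by simp
        then show False using ab calculation(1) e(2) by simp
      qed
      ultimately show "s h ab * tw_right_act G \<omega> \<phi> (ab, g) xy = 0" unfolding tw_right_act_def xyd by auto
    qed (use fH b xyd in auto)
    have eqv: "x \<otimes> (b \<otimes> g) = h \<otimes> g \<longleftrightarrow> x \<otimes> b = h" using g b h xyd HG by (simp add: m_assoc[symmetric])
    have Dg: "\<phi> b g * inverse (\<phi> (x \<otimes> b) g) * \<phi> x (b \<otimes> g) * inverse (\<phi> x b) = inverse (\<omega> x b g)"
      using D g b xyd unfolding cobound2_def by auto
    have nz1: "\<phi> b g \<noteq> 0" "\<phi> (x \<otimes> b) g \<noteq> 0" "\<phi> x (b \<otimes> g) \<noteq> 0" "\<phi> x b \<noteq> 0" "\<omega> x b g \<noteq> 0"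
      using ph om g b xyd mc by auto
    have key: "inverse (\<phi> x (b \<otimes> g)) * \<phi> (x \<otimes> b) g = inverse (\<phi> x b) * (\<omega> x b g * \<phi> b g)"
    proof -
      have "\<omega> x b g = inverse (\<phi> b g * inverse (\<phi> (x \<otimes> b) g) * \<phi> x (b \<otimes> g) * inverse (\<phi> x b))"
        using Dg nz1 by simp
      then show ?thesis using nz1 by (simp add: field_simps)
    qed
    show ?thesis unfolding L R
      using key eqv unfolding s_def tw_mult_def tw_right_act_def xyd y
      by (auto simp: mult_ac)
  qed
  show ?thesis unfolding twisted_group_alg_separable_def
    apply (rule exI[of _ s])
    apply (intro conjI)
    subgoal by (rule C1)
    subgoal by (intro ballI C2)
    subgoal by (intro ballI C3)
    subgoal by (intro ballI C4)
    done
qed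


lemma main_dir2:
  fixes G :: "('g, 'b) monoid_scheme" (structure)
    and \<omega> :: "'g \<Rightarrow> 'g \<Rightarrow> 'g \<Rightarrow> 'k::field"
    and \<phi> :: "'g \<Rightarrow> 'g \<Rightarrow> 'k"
  assumes gr: "group G" and sg: "subgroup H G" and fH: "finite H"
    and om: "\<forall>a\<in>H. \<forall>b\<in>H. \<forall>c\<in>H. \<omega> a b c \<noteq> 0"
    and ph: "\<forall>a\<in>H. \<forall>b\<in>H. \<phi> a b \<noteq> 0"
    and D: "\<forall>a\<in>H. \<forall>b\<in>H. \<forall>c\<in>H. cobound2 G \<phi> a b c = inverse (\<omega> a b c)"
    and sep: "twisted_group_alg_separable G \<omega> H \<phi>"
  shows "of_nat (card H) \<noteq> (0::'k)"
proof -
  interpret group G by (rule gr)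
  have HG: "\<And>x. x \<in> H \<Longrightarrow> x \<in> carrier G" by (rule subgroup.mem_carrier[OF sg])
  have mc: "\<And>x y. x \<in> H \<Longrightarrow> y \<in> H \<Longrightarrow> x \<otimes> y \<in> H" by (rule subgroup.m_closed[OF sg])
  have ic: "\<And>x. x \<in> H \<Longrightarrow> inv x \<in> H" by (rule subgroup.m_inv_closed[OF sg])
  have oH: "\<one> \<in> H" by (rule subgroup.one_closed[OF sg])
  obtain s :: "'g \<Rightarrow> 'g \<times> 'g \<Rightarrow> 'k" where
    S2: "\<forall>h\<in>H. \<forall>h'\<in>H. (\<Sum>ab\<in>H \<times> H. s h ab * tw_mult G \<phi> ab h') = (if h' = h then 1 else 0)" and
    S3: "\<forall>g\<in>H. \<forall>h\<in>H. \<forall>xy\<in>H \<times> H.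
          (\<Sum>c\<in>H. tw_mult G \<phi> (g, h) c * s c xy)
          = (\<Sum>ab\<in>H \<times> H. s h ab * tw_left_act G \<omega> \<phi> (g, ab) xy)" and
    S4: "\<forall>h\<in>H. \<forall>g\<in>H. \<forall>xy\<in>H \<times> H.
          (\<Sum>c\<in>H. tw_mult G \<phi> (h, g) c * s c xy)
          = (\<Sum>ab\<in>H \<times> H. s h ab * tw_right_act G \<omega> \<phi> (ab, g) xy)"
    using sep unfolding twisted_group_alg_separable_def by blast
  define u where "u = (\<lambda>a y. s (a \<otimes> y) (a, y) * \<phi> a y)"
  have U1: "u (g \<otimes> a) y = u a y" if g: "g \<in> H" and a: "a \<in> H" and y: "y \<in> H" for g a y
  proof -
    have e: "(\<Sum>c\<in>H. tw_mult G \<phi> (g, a \<otimes> y) c * s c (g \<otimes> a, y))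
          = (\<Sum>ab\<in>H \<times> H. s (a \<otimes> y) ab * tw_left_act G \<omega> \<phi> (g, ab) (g \<otimes> a, y))"
      using S3 g a y mc by blast
    have L: "(\<Sum>c\<in>H. tw_mult G \<phi> (g, a \<otimes> y) c * s c (g \<otimes> a, y)) = \<phi> g (a \<otimes> y) * s (g \<otimes> (a \<otimes> y)) (g \<otimes> a, y)"
      by (subst sum_single_nz[OF fH mc[OF g mc[OF a y]]]) (auto simp: tw_mult_def)
    have R: "(\<Sum>ab\<in>H \<times> H. s (a \<otimes> y) ab * tw_left_act G \<omega> \<phi> (g, ab) (g \<otimes> a, y))
       = s (a \<otimes> y) (a, y) * (inverse (\<omega> g a y) * \<phi> g a)"
    proof (subst sum_single_nz[where p = "(a, y)"])
      fix ab assume ab: "ab \<in> H \<times> H" "ab \<noteq> (a, y)"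
      then obtain a' b' where ab': "ab = (a', b')" "a' \<in> H" "b' \<in> H" by auto
      have "(g \<otimes> a, y) \<noteq> (g \<otimes> a', b')"
      proof
        assume "(g \<otimes> a, y) = (g \<otimes> a', b')"
        then have e: "g \<otimes> a = g \<otimes> a'" "y = b'" by auto
        then have "a = a'" using e(1) HG g a ab'(2) by (simp add: Units_eq)
        then show False using ab ab'(1) e(2) by simp
      qed
      then show "s (a \<otimes> y) ab * tw_left_act G \<omega> \<phi> (g, ab) (g \<otimes> a, y) = 0"
        unfolding tw_left_act_def ab'(1) by auto
    qed (use fH a y in \<open>auto simp: tw_left_act_def\<close>)
    have Dg: "\<phi> a y * inverse (\<phi> (g \<otimes> a) y) * \<phi> g (a \<otimes> y) * inverse (\<phi> g a) = inverse (\<omega> g a y)"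
      using D g a y unfolding cobound2_def by auto
    have nz1: "\<phi> a y \<noteq> 0" "\<phi> (g \<otimes> a) y \<noteq> 0" "\<phi> g (a \<otimes> y) \<noteq> 0" "\<phi> g a \<noteq> 0" "\<omega> g a y \<noteq> 0"
      using ph om g a y mc by auto
    have om': "\<omega> g a y = inverse (\<phi> a y * inverse (\<phi> (g \<otimes> a) y) * \<phi> g (a \<otimes> y) * inverse (\<phi> g a))"
      using Dg nz1 by simp
    have as: "g \<otimes> (a \<otimes> y) = (g \<otimes> a) \<otimes> y" using HG g a y by (simp add: m_assoc)
    have E: "\<phi> g (a \<otimes> y) * s ((g \<otimes> a) \<otimes> y) (g \<otimes> a, y) = s (a \<otimes> y) (a, y) * (inverse (\<omega> g a y) * \<phi> g a)"
      using e L R as by simp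
    have "s ((g \<otimes> a) \<otimes> y) (g \<otimes> a, y) = s (a \<otimes> y) (a, y) * (inverse (\<omega> g a y) * \<phi> g a) / \<phi> g (a \<otimes> y)"
      using E nz1 by (simp add: field_simps)
    then show ?thesis unfolding u_def using nz1 om' by (simp add: field_simps)
  qed
  have U2: "u x (b \<otimes> g) = u x b" if x: "x \<in> H" and b: "b \<in> H" and g: "g \<in> H" for x b g
  proof -
    have e: "(\<Sum>c\<in>H. tw_mult G \<phi> (x \<otimes> b, g) c * s c (x, b \<otimes> g))
          = (\<Sum>ab\<in>H \<times> H. s (x \<otimes> b) ab * tw_right_act G \<omega> \<phi> (ab, g) (x, b \<otimes> g))"
      using S4 g x b mc by blast
    have L: "(\<Sum>c\<in>H. tw_mult G \<phi> (x \<otimes> b, g) c * s c (x, b \<otimes> g)) = \<phi> (x \<otimes> b) g * s ((x \<otimes> b) \<otimes> g) (x, b \<otimes> g)"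
      by (subst sum_single_nz[OF fH mc[OF mc[OF x b] g]]) (auto simp: tw_mult_def)
    have R: "(\<Sum>ab\<in>H \<times> H. s (x \<otimes> b) ab * tw_right_act G \<omega> \<phi> (ab, g) (x, b \<otimes> g))
       = s (x \<otimes> b) (x, b) * (\<omega> x b g * \<phi> b g)"
    proof (subst sum_single_nz[where p = "(x, b)"])
      fix ab assume ab: "ab \<in> H \<times> H" "ab \<noteq> (x, b)"
      then obtain a' b' where ab': "ab = (a', b')" "a' \<in> H" "b' \<in> H" by auto
      have "(x, b \<otimes> g) \<noteq> (a', b' \<otimes> g)"
      proof
        assume "(x, b \<otimes> g) = (a', b' \<otimes> g)"
        then have e: "b \<otimes> g = b' \<otimes> g" "x = a'" by auto
        then have "b = b'" using e(1) HG g b ab'(3) by simp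
        then show False using ab ab'(1) e(2) by simp
      qed
      then show "s (x \<otimes> b) ab * tw_right_act G \<omega> \<phi> (ab, g) (x, b \<otimes> g) = 0"
        unfolding tw_right_act_def ab'(1) by auto
    qed (use fH x b in \<open>auto simp: tw_right_act_def\<close>)
    have Dg: "\<phi> b g * inverse (\<phi> (x \<otimes> b) g) * \<phi> x (b \<otimes> g) * inverse (\<phi> x b) = inverse (\<omega> x b g)"
      using D g b x unfolding cobound2_def by auto
    have nz1: "\<phi> b g \<noteq> 0" "\<phi> (x \<otimes> b) g \<noteq> 0" "\<phi> x (b \<otimes> g) \<noteq> 0" "\<phi> x b \<noteq> 0" "\<omega> x b g \<noteq> 0"
      using ph om g b x mc by auto
    have om': "\<omega> x b g = inverse (\<phi> b g * inverse (\<phi> (x \<otimes> b) g) * \<phi> x (b \<otimes> g) * inverse (\<phi> x b))"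
      using Dg nz1 by simp
    have as: "(x \<otimes> b) \<otimes> g = x \<otimes> (b \<otimes> g)" using HG g x b by (simp add: m_assoc)
    have E: "\<phi> (x \<otimes> b) g * s (x \<otimes> (b \<otimes> g)) (x, b \<otimes> g) = s (x \<otimes> b) (x, b) * (\<omega> x b g * \<phi> b g)"
      using e L R as by simp
    have "s (x \<otimes> (b \<otimes> g)) (x, b \<otimes> g) = s (x \<otimes> b) (x, b) * (\<omega> x b g * \<phi> b g) / \<phi> (x \<otimes> b) g"
      using E nz1 by (simp add: field_simps)
    then show ?thesis unfolding u_def using nz1 om' by (simp add: field_simps)
  qed
  define c where "c = u \<one> \<one>"
  have Uc: "u a b = c" if a: "a \<in> H" and b: "b \<in> H" for a b
  proof -
    have "u a b = u (a \<otimes> \<one>) b" using a HG by simp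
    also have "\<dots> = u \<one> b" using U1[OF a oH b] .
    also have "\<dots> = u \<one> (\<one> \<otimes> b)" using b HG by simp
    also have "\<dots> = u \<one> \<one>" using U2[OF oH oH b] .
    finally show ?thesis unfolding c_def .
  qed
  have "1 = (\<Sum>ab\<in>H \<times> H. s \<one> ab * tw_mult G \<phi> ab \<one>)" using S2 oH by simp
  also have "\<dots> = (\<Sum>a\<in>H. \<Sum>b\<in>H. s \<one> (a,b) * tw_mult G \<phi> (a,b) \<one>)"
    by (simp add: sum.cartesian_product)
  also have "\<dots> = (\<Sum>a\<in>H. c)"
  proof (rule sum.cong[OF refl])
    fix a assume a: "a \<in> H"
    have "(\<Sum>b\<in>H. s \<one> (a,b) * tw_mult G \<phi> (a,b) \<one>) = s \<one> (a, inv a) * tw_mult G \<phi> (a, inv a) \<one>"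
    proof (rule sum_single_nz[OF fH ic[OF a]])
      fix b assume b: "b \<in> H" "b \<noteq> inv a"
      have "\<one> \<noteq> a \<otimes> b" using inv_equality[of a b] b a HG by auto
      then show "s \<one> (a, b) * tw_mult G \<phi> (a, b) \<one> = 0" unfolding tw_mult_def by simp
    qed
    also have "\<dots> = u a (inv a)" unfolding u_def tw_mult_def using a HG by simp
    also have "\<dots> = c" using Uc a ic by simp
    finally show "(\<Sum>b\<in>H. s \<one> (a,b) * tw_mult G \<phi> (a,b) \<one>) = c" .
  qed
  also have "\<dots> = of_nat (card H) * c" by simp
  finally show ?thesis by auto
qed


theorem lemma1p1p8:
  fixes G :: "('g, 'b) monoid_scheme"
    and \<omega> :: "'g \<Rightarrow> 'g \<Rightarrow> 'g \<Rightarrow> 'k::alg_closed_field"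
    and H :: "'g set"
    and \<phi> :: "'g \<Rightarrow> 'g \<Rightarrow> 'k"
  assumes "CHAR('k) > 0"
    and "group G" and "finite (carrier G)"
    and "is_3cocycle G \<omega>"
    and "subgroup H G"
    and "\<forall>a\<in>H. \<forall>b\<in>H. \<phi> a b \<noteq> 0"
    and "\<forall>a\<in>H. \<forall>b\<in>H. \<forall>c\<in>H. cobound2 G \<phi> a b c = inverse (\<omega> a b c)"
  shows "module_cat_M_separable G \<omega> H \<phi> \<longleftrightarrow> has_no_p_torsion G H CHAR('k)"
proof -
  have pr: "prime CHAR('k)" by (rule prime_CHAR_semidom[OF assms(1)])
  have fH: "finite H" by (rule finite_subset[OF subgroup.subset[OF assms(5)] assms(3)])
  have om: "\<forall>a\<in>H. \<forall>b\<in>H. \<forall>c\<in>H. \<omega> a b c \<noteq> 0"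
    using assms(4) subgroup.subset[OF assms(5)] unfolding is_3cocycle_def by blast
  have nz: "of_nat (card H) \<noteq> (0::'k) \<longleftrightarrow> \<not> CHAR('k) dvd card H"
    by (simp add: of_nat_eq_0_iff_char_dvd)
  show ?thesis
  proof
    assume "module_cat_M_separable G \<omega> H \<phi>"
    then have "twisted_group_alg_separable G \<omega> H \<phi>" unfolding module_cat_M_separable_def .
    then have "of_nat (card H) \<noteq> (0::'k)"
      using main_dir2[OF assms(2) assms(5) fH om assms(6) assms(7)] by blast
    then have nd: "\<not> CHAR('k) dvd card H" using nz by simp
    show "has_no_p_torsion G H CHAR('k)" unfolding has_no_p_torsion_def
    proof (intro ballI impI)
      fix h assume h: "h \<in> H" "h [^]\<^bsub>G\<^esub> CHAR('k) = \<one>\<^bsub>G\<^esub>"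
      show "h = \<one>\<^bsub>G\<^esub>"
      proof (rule ccontr)
        assume "h \<noteq> \<one>\<^bsub>G\<^esub>"
        then have "CHAR('k) dvd card H" using ptors[OF assms(2) assms(5) fH pr h] by blast
        then show False using nd by simp
      qed
    qed
  next
    assume t: "has_no_p_torsion G H CHAR('k)"
    have "\<not> CHAR('k) dvd card H"
    proof
      assume "CHAR('k) dvd card H"
      then obtain x where "x \<in> H" "x \<noteq> \<one>\<^bsub>G\<^esub>" "x [^]\<^bsub>G\<^esub> CHAR('k) = \<one>\<^bsub>G\<^esub>"
        using cauchy_sub[OF assms(2) assms(3) assms(5) pr] by blast
      then show False using t unfolding has_no_p_torsion_def by blast
    qed
    then have "of_nat (card H) \<noteq> (0::'k)" using nz by simp
    then have "twisted_group_alg_separable G \<omega> H \<phi>"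
      using main_dir1[OF assms(2) assms(5) fH _ om assms(6) assms(7)] by blast
    then show "module_cat_M_separable G \<omega> H \<phi>" unfolding module_cat_M_separable_def .
  qed
qed

end
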